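(* For every $h>1/3$ and $q>1/2$ there is an instance with two groups of additive agents in which no allocation is $h$-democratic $q$-fraction-MMS-fair.
   Context: There is a finite set $G$ of goods and two groups $A_1,A_2$ with $n_i\ge1$ agents in $A_i$. Each agent has an additive utility $u_a:2^G\to\mathbb{R}_{\ge0}$. An allocation is a partition $(G_1,G_2)$ of $G$; agents of $A_i$ get $u_a(G_i)$. $\mathrm{MMS}^2_a(G)=\max\min(u_a(P_1),u_a(P_2))$ over partitions $(P_1,P_2)$ of $G$. The allocation is $q$-fraction-MMS-fair for $a\in A_i$ if $u_a(G_i)\ge q\,\mathrm{MMS}^2_a(G)$. An allocation is $h$-democratic fair if for each $i$ at least $h\cdot n_i$ agents of $A_i$ find it fair. *)

theory Defs
  imports Main "HOL-Library.FuncSet" Complex_Main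
begin

definition util :: "('g \<Rightarrow> real) \<Rightarrow> 'g set \<Rightarrow> real" where
  "util v S = (\<Sum>g\<in>S. v g)"

definition MMS2 :: "('g \<Rightarrow> real) \<Rightarrow> 'g set \<Rightarrow> real" where
  "MMS2 v G = Max ((\<lambda>P. min (util v P) (util v (G - P))) ` Pow G)"

definition q_MMS_fair :: "real \<Rightarrow> ('g \<Rightarrow> real) \<Rightarrow> 'g set \<Rightarrow> 'g set \<Rightarrow> bool" where
  "q_MMS_fair q v G B \<longleftrightarrow> util v B \<ge> q * MMS2 v G"

definition group_bundle :: "'g set \<Rightarrow> 'g set \<Rightarrow> nat \<Rightarrow> 'g set" where
  "group_bundle G G1 i = (if i = 1 then G1 else G - G1)"

definition democratic_fair ::
  "real \<Rightarrow> real \<Rightarrow> 'g set \<Rightarrow> (nat \<Rightarrow> nat) \<Rightarrow> (nat \<Rightarrow> nat \<Rightarrow> 'g \<Rightarrow> real) \<Rightarrow> 'g set \<Rightarrow> bool" where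
  "democratic_fair h q G n val G1 \<longleftrightarrow>
     (\<forall>i\<in>{1,2::nat}.
        real (card {a. a < n i \<and> q_MMS_fair q (val i a) G (group_bundle G G1 i)}) \<ge> h * real (n i))"

end

theory Submission
  imports Defs
begin

definition vv :: "nat \<Rightarrow> nat \<Rightarrow> nat \<Rightarrow> real" where
  "vv i a g = (if g = a then 2 else 1)"

lemma pow3: "Pow {0::nat,1,2} = {{},{0},{1},{2},{0,1},{0,2},{1,2},{0,1,2}}"
  by (simp add: Pow_insert insert_commute)

lemma lt3: "{a::nat. a < 3 \<and> P a} = {a. a \<in> {0,1,2} \<and> P a}"
  by auto

lemma key: "S \<subseteq> {0,1,2} \<Longrightarrow>
   card {a::nat. a < 3 \<and> util (vv i a) S > 1} \<le> 1 \<or>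
   card {a::nat. a < 3 \<and> util (vv j a) ({0,1,2} - S) > 1} \<le> 1"
proof -
  assume "S \<subseteq> {0,1,2}"
  hence "S \<in> Pow {0,1,2}" by simp
  thus ?thesis unfolding pow3 lt3
    by (auto simp: util_def vv_def insert_Diff_if)
qed

lemma mms: "a < 3 \<Longrightarrow> MMS2 (vv i a) {0,1,2} \<ge> 2"
proof -
  assume a: "a < 3"
  have "{a} \<in> Pow {0::nat,1,2}" using a by auto
  hence "min (util (vv i a) {a}) (util (vv i a) ({0,1,2} - {a}))
      \<le> MMS2 (vv i a) {0,1,2}" unfolding MMS2_def
    by (intro Max_ge) auto
  moreover have "min (util (vv i a) {a}) (util (vv i a) ({0,1,2} - {a})) = 2"
    using a by (auto simp: util_def vv_def less_Suc_eq insert_Diff_if)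
  ultimately show ?thesis by simp
qed

lemma fair_imp: "q > 1/2 \<Longrightarrow> a < 3 \<Longrightarrow> q_MMS_fair q (vv i a) {0,1,2} B \<Longrightarrow> util (vv i a) B > 1"
proof -
  assume q: "q > 1/2" and a: "a < 3" and f: "q_MMS_fair q (vv i a) {0,1,2} B"
  have "q * MMS2 (vv i a) {0,1,2} \<ge> q * 2" using mms[OF a] q by (intro mult_left_mono) auto
  thus ?thesis using f q unfolding q_MMS_fair_def by linarith
qed

lemma card_le: "finite B \<Longrightarrow> A \<subseteq> B \<Longrightarrow> card B \<le> 1 \<Longrightarrow> card A \<le> 1"
  by (meson card_mono le_trans)

theorem mainTheorem11:
  fixes h q :: real
  assumes "h > 1/3" and "q > 1/2"
  shows "\<exists>(G :: nat set) (n :: nat \<Rightarrow> nat) (val :: nat \<Rightarrow> nat \<Rightarrow> nat \<Rightarrow> real).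
           finite G \<and> n 1 \<ge> 1 \<and> n 2 \<ge> 1 \<and>
           (\<forall>i a g. val i a g \<ge> 0) \<and>
           (\<forall>G1. G1 \<subseteq> G \<longrightarrow> \<not> democratic_fair h q G n val G1)"
proof (intro exI conjI allI impI)
  show "finite {0::nat,1,2}" by simp
  show "(1::nat) \<le> (\<lambda>_. 3) 1" "(1::nat) \<le> (\<lambda>_. 3) 2" by auto
  show "\<And>i a g. 0 \<le> vv i a g" by (simp add: vv_def)
  fix G1 assume G1: "G1 \<subseteq> {0::nat,1,2}"
  let ?F = "\<lambda>i. {a. a < (\<lambda>_. 3::nat) i \<and> q_MMS_fair q (vv i a) {0,1,2} (group_bundle {0,1,2} G1 i)}"
  have sub: "?F i \<subseteq> {a::nat. a < 3 \<and> util (vv i a) (group_bundle {0,1,2} G1 i) > 1}" for i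
    using fair_imp[OF assms(2)] by auto
  have fin: "finite {a::nat. a < 3 \<and> P a}" for P by simp
  have "card (?F 1) \<le> 1 \<or> card (?F 2) \<le> 1"
    using key[OF G1, of 1 2] card_le[OF fin sub[of 1]] card_le[OF fin sub[of 2]]
    by (auto simp: group_bundle_def)
  hence "real (card (?F 1)) < h * 3 \<or> real (card (?F 2)) < h * 3"
    using assms(1) by auto
  thus "\<not> democratic_fair h q {0,1,2} (\<lambda>_. 3) vv G1"
    unfolding democratic_fair_def by force
qed

end
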